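(* Let $p\ge 1$, let $A\in\mathbb{R}^{n\times d}$ and let $w\in\mathbb{R}^n$ be a unit vector with $A^\top w\ne 0$, and let $v=A^\top w/\|A^\top w\|_2$. Then \[ \|A\|_{\mathcal{S}_p}^p \ge \|ww^\top A\|_{\mathcal{S}_p}^p + \left\|A\left(I-vv^\top\right)\right\|_{\mathcal{S}_p}^p. \]
   Context: For a matrix $M$ with singular values $\sigma_1\ge\sigma_2\ge\cdots$, $\|M\|_{\mathcal{S}_p}=\left(\sum_i\sigma_i(M)^p\right)^{1/p}$. *)

theory Defs
  imports "Jordan_Normal_Form.Char_Poly" "HOL-Computational_Algebra.Polynomial"
begin

(* A^T A is symmetric PSD, so its characteristic polynomial splits over the reals. *)
definition singular_values :: "real mat \<Rightarrow> real multiset" where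
  "singular_values A = image_mset sqrt (proots (char_poly (transpose_mat A * A)))"

definition schatten_norm :: "real \<Rightarrow> real mat \<Rightarrow> real" where
  "schatten_norm p A = (\<Sum>\<sigma>\<in>#singular_values A. \<sigma> powr p) powr (1 / p)"

definition vnorm2 :: "real vec \<Rightarrow> real" where
  "vnorm2 x = sqrt (x \<bullet> x)"

definition outer_prod :: "real vec \<Rightarrow> real vec \<Rightarrow> real mat" where
  "outer_prod x y = mat (dim_vec x) (dim_vec y) (\<lambda>(i, j). x $ i * y $ j)"

end

theory Submission
  imports Defs
begin

definition ip :: "nat \<Rightarrow> (nat \<Rightarrow> real) \<Rightarrow> (nat \<Rightarrow> real) \<Rightarrow> real" where
  "ip m x y = (\<Sum>a<m. x a * y a)"

definition orthon :: "nat \<Rightarrow> nat \<Rightarrow> (nat \<Rightarrow> nat \<Rightarrow> real) \<Rightarrow> bool" where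
  "orthon m k h = (\<forall>i<k. \<forall>j<k. ip m (h i) (h j) = (if i = j then 1 else 0))"

lemma complete:
  assumes "orthon m m h" "a < m" "b < m"
  shows "(\<Sum>i<m. h i a * h i b) = (if a = b then 1 else 0)"
proof -
  define Q where "Q = mat m m (\<lambda>(a,i). h i a)"
  have Q: "Q \<in> carrier_mat m m" "transpose_mat Q \<in> carrier_mat m m" unfolding Q_def by auto
  have "transpose_mat Q * Q = 1\<^sub>m m"
  proof (rule eq_matI)
    fix i j assume ij: "i < dim_row (1\<^sub>m m)" "j < dim_col (1\<^sub>m m)"
    have "(transpose_mat Q * Q) $$ (i,j) = (\<Sum>a<m. h i a * h j a)"
      using ij unfolding Q_def by (simp add: scalar_prod_def atLeast0LessThan)
    also have "\<dots> = (if i = j then 1 else 0)" using assms(1) ij unfolding orthon_def ip_def by auto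
    finally show "(transpose_mat Q * Q) $$ (i,j) = 1\<^sub>m m $$ (i,j)" using ij by simp
  qed (auto simp: Q_def)
  then have "Q * transpose_mat Q = 1\<^sub>m m" using mat_mult_left_right_inverse[OF Q(2) Q(1)] by simp
  then have "(Q * transpose_mat Q) $$ (a,b) = 1\<^sub>m m $$ (a,b)" by simp
  then show ?thesis using assms(2,3) unfolding Q_def by (simp add: scalar_prod_def atLeast0LessThan)
qed

lemma expand:
  assumes "orthon m m h" "a < m"
  shows "x a = (\<Sum>i<m. ip m x (h i) * h i a)"
proof -
  have "(\<Sum>i<m. ip m x (h i) * h i a) = (\<Sum>i<m. \<Sum>b<m. x b * h i b * h i a)"
    unfolding ip_def by (simp add: sum_distrib_right)
  also have "\<dots> = (\<Sum>b<m. x b * (\<Sum>i<m. h i a * h i b))"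
    by (subst sum.swap) (simp add: sum_distrib_left mult_ac)
  also have "\<dots> = (\<Sum>b<m. x b * (if a = b then 1 else 0))"
    using complete[OF assms(1) assms(2)] by simp
  also have "\<dots> = (\<Sum>b<m. if a = b then x b else 0)" by (intro sum.cong) auto
  also have "\<dots> = x a" using assms(2) by (simp add: sum.delta)
  finally show ?thesis by simp
qed

lemma parseval:
  assumes "orthon m m h"
  shows "ip m x y = (\<Sum>i<m. ip m x (h i) * ip m y (h i))"
proof -
  have "ip m x y = (\<Sum>a<m. x a * (\<Sum>i<m. ip m y (h i) * h i a))"
    unfolding ip_def[of m x y] using expand[OF assms, of _ y] by (intro sum.cong) auto
  also have "\<dots> = (\<Sum>a<m. \<Sum>i<m. ip m y (h i) * (x a * h i a))"
    by (simp add: sum_distrib_left mult_ac)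
  also have "\<dots> = (\<Sum>i<m. \<Sum>a<m. ip m y (h i) * (x a * h i a))"
    by (rule sum.swap)
  also have "\<dots> = (\<Sum>i<m. ip m x (h i) * ip m y (h i))"
    by (simp add: ip_def[of m x] sum_distrib_left mult_ac)
  finally show ?thesis .
qed

lemma bessel:
  assumes "finite K" "\<And>i j. i \<in> K \<Longrightarrow> j \<in> K \<Longrightarrow> ip m (g i) (g j) = (if i = j then 1 else 0)"
  shows "(\<Sum>i\<in>K. (ip m x (g i))\<^sup>2) \<le> ip m x x"
proof -
  define c where "c i = ip m x (g i)" for i
  define r where "r a = x a - (\<Sum>i\<in>K. c i * g i a)" for a
  have "0 \<le> ip m r r" unfolding ip_def by (intro sum_nonneg) auto
  also have "ip m r r = ip m x x - 2 * (\<Sum>i\<in>K. c i * ip m x (g i)) + (\<Sum>i\<in>K. \<Sum>j\<in>K. c i * c j * ip m (g i) (g j))"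
  proof -
    define s where "s a = (\<Sum>i\<in>K. c i * g i a)" for a
    have 1: "ip m r r = ip m x x - 2 * (\<Sum>a<m. x a * s a) + (\<Sum>a<m. s a * s a)"
      unfolding ip_def r_def s_def[symmetric]
      by (simp add: algebra_simps sum.distrib sum_subtractf sum_distrib_left power2_eq_square)
    have 2: "(\<Sum>a<m. x a * s a) = (\<Sum>i\<in>K. c i * ip m x (g i))"
    proof -
      have "(\<Sum>a<m. x a * s a) = (\<Sum>a<m. \<Sum>i\<in>K. c i * (x a * g i a))"
        unfolding s_def by (simp add: sum_distrib_left mult_ac)
      also have "\<dots> = (\<Sum>i\<in>K. \<Sum>a<m. c i * (x a * g i a))" by (rule sum.swap)
      also have "\<dots> = (\<Sum>i\<in>K. c i * ip m x (g i))" by (simp add: ip_def sum_distrib_left)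
      finally show ?thesis .
    qed
    have 3: "(\<Sum>a<m. s a * s a) = (\<Sum>i\<in>K. \<Sum>j\<in>K. c i * c j * ip m (g i) (g j))"
    proof -
      have "(\<Sum>a<m. s a * s a) = (\<Sum>a<m. \<Sum>i\<in>K. \<Sum>j\<in>K. c i * c j * (g i a * g j a))"
        unfolding s_def by (simp add: sum_distrib_left sum_distrib_right mult_ac)
      also have "\<dots> = (\<Sum>i\<in>K. \<Sum>a<m. \<Sum>j\<in>K. c i * c j * (g i a * g j a))" by (rule sum.swap)
      also have "\<dots> = (\<Sum>i\<in>K. \<Sum>j\<in>K. \<Sum>a<m. c i * c j * (g i a * g j a))"
        by (intro sum.cong refl sum.swap)
      also have "\<dots> = (\<Sum>i\<in>K. \<Sum>j\<in>K. c i * c j * ip m (g i) (g j))" by (simp add: ip_def sum_distrib_left)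
      finally show ?thesis .
    qed
    show ?thesis using 1 2 3 by simp
  qed
  also have "(\<Sum>i\<in>K. \<Sum>j\<in>K. c i * c j * ip m (g i) (g j)) = (\<Sum>i\<in>K. c i * c i)"
  proof (rule sum.cong[OF refl])
    fix i assume i: "i \<in> K"
    have "(\<Sum>j\<in>K. c i * c j * ip m (g i) (g j)) = (\<Sum>j\<in>K. if i = j then c i * c j else 0)"
      using assms(2) i by (intro sum.cong) auto
    also have "\<dots> = c i * c i" using i assms(1) by (simp add: sum.delta)
    finally show "(\<Sum>j\<in>K. c i * c j * ip m (g i) (g j)) = c i * c i" .
  qed
  finally show ?thesis unfolding c_def by (simp add: power2_eq_square)
qed

lemma real_root_real:
  fixes X :: "nat \<Rightarrow> nat \<Rightarrow> real" and z :: "nat \<Rightarrow> complex" and c :: complex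
  assumes sym: "\<And>a b. a<m \<Longrightarrow> b<m \<Longrightarrow> X a b = X b a"
    and ev: "\<And>a. a < m \<Longrightarrow> (\<Sum>b<m. of_real (X a b) * z b) = c * z a"
    and nz: "a0 < m" "z a0 \<noteq> 0"
  shows "Im c = 0"
proof -
  define s where "s = (\<Sum>a<m. \<Sum>b<m. cnj (z a) * of_real (X a b) * z b)"
  define N where "N = (\<Sum>a<m. cnj (z a) * z a)"
  have sN: "s = c * N"
  proof -
    have "s = (\<Sum>a<m. cnj (z a) * (\<Sum>b<m. of_real (X a b) * z b))"
      unfolding s_def by (simp add: sum_distrib_left mult_ac)
    also have "\<dots> = (\<Sum>a<m. cnj (z a) * (c * z a))" using ev by simp
    finally show ?thesis unfolding N_def by (simp add: sum_distrib_left mult_ac)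
  qed
  have "cnj s = (\<Sum>a<m. \<Sum>b<m. z a * of_real (X a b) * cnj (z b))"
    unfolding s_def by (simp add: cnj_sum)
  also have "\<dots> = (\<Sum>b<m. \<Sum>a<m. z a * of_real (X a b) * cnj (z b))" by (rule sum.swap)
  also have "\<dots> = s" unfolding s_def using sym by (intro sum.cong refl) (simp add: mult_ac)
  finally have cs: "cnj s = s" .
  have Nreal: "N = of_real (\<Sum>a<m. (cmod (z a))\<^sup>2)"
    unfolding N_def of_real_sum by (intro sum.cong refl) (simp only: of_real_power[symmetric] complex_norm_square mult.commute)
  have "(cmod (z a0))\<^sup>2 > 0" using nz by simp
  moreover have "(cmod (z a0))\<^sup>2 \<le> (\<Sum>a<m. (cmod (z a))\<^sup>2)"
    using nz(1) by (intro member_le_sum) auto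
  ultimately have Npos: "(\<Sum>a<m. (cmod (z a))\<^sup>2) > 0" by linarith
  have "c * N = cnj c * N" using cs sN Nreal by (metis complex_cnj_complex_of_real complex_cnj_mult)
  then have "c = cnj c" using Npos Nreal by (metis mult_cancel_right of_real_eq_0_iff order_less_irrefl)
  then have "Im c = Im (cnj c)" by simp
  then show ?thesis by simp
qed

lemma sym_eigen_exists:
  fixes X :: "nat \<Rightarrow> nat \<Rightarrow> real"
  assumes m: "0 < m" and sym: "\<And>a b. a<m \<Longrightarrow> b<m \<Longrightarrow> X a b = X b a"
  shows "\<exists>\<mu> z. (\<exists>a<m. z a \<noteq> 0) \<and> (\<forall>a<m. (\<Sum>b<m. X a b * z b) = \<mu> * z a)"
proof -
  define XJ where "XJ = mat m m (\<lambda>(a,b). X a b)"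
  have XJ: "XJ \<in> carrier_mat m m" unfolding XJ_def by simp
  define Xc where "Xc = map_mat complex_of_real XJ"
  have Xc: "Xc \<in> carrier_mat m m" unfolding Xc_def using XJ by simp
  obtain as where as: "char_poly Xc = (\<Prod>a\<leftarrow>as. [:- a, 1:])" "length as = m"
    using char_poly_factorized[OF Xc] by blast
  define c where "c = as ! 0"
  have cin: "c \<in> set as" unfolding c_def using as(2) m by simp
  have "poly (char_poly Xc) c = 0"
    unfolding as(1) poly_prod_list prod_list_zero_iff using cin by force
  then have "eigenvalue Xc c" using eigenvalue_root_char_poly[OF Xc] by simp
  then obtain z where z: "eigenvector Xc z c" unfolding eigenvalue_def by blast
  then have zc: "z \<in> carrier_vec m" and z0: "z \<noteq> 0\<^sub>v m" and zev: "Xc *\<^sub>v z = c \<cdot>\<^sub>v z"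
    unfolding eigenvector_def using Xc by auto
  have ev: "(\<Sum>b<m. of_real (X a b) * z $ b) = c * z $ a" if a: "a < m" for a
  proof -
    have "(Xc *\<^sub>v z) $ a = (c \<cdot>\<^sub>v z) $ a" using zev by simp
    then show ?thesis using a zc Xc unfolding Xc_def XJ_def
      by (simp add: scalar_prod_def atLeast0LessThan)
  qed
  obtain a0 where a0: "a0 < m" "z $ a0 \<noteq> 0"
    using z0 zc by (metis carrier_vecD eq_vecI index_zero_vec(1) index_zero_vec(2))
  have "Im c = 0" by (rule real_root_real[OF sym ev a0]) auto
  then have cr: "c = of_real (Re c)" by (simp add: complex_eq_iff)
  have "poly (char_poly Xc) (of_real (Re c)) = 0" using \<open>poly (char_poly Xc) c = 0\<close> cr by simp
  moreover have "char_poly Xc = map_poly of_real (char_poly XJ)"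
    unfolding Xc_def using of_real_hom.char_poly_hom[OF XJ] by simp
  ultimately have "poly (char_poly XJ) (Re c) = 0"
    using of_real_hom.poly_map_poly by (metis of_real_eq_0_iff)
  then have "eigenvalue XJ (Re c)" using eigenvalue_root_char_poly[OF XJ] by simp
  then obtain y where "eigenvector XJ y (Re c)" unfolding eigenvalue_def by blast
  then have yc: "y \<in> carrier_vec m" and y0: "y \<noteq> 0\<^sub>v m" and yev: "XJ *\<^sub>v y = Re c \<cdot>\<^sub>v y"
    unfolding eigenvector_def using XJ by auto
  obtain b0 where b0: "b0 < m" "y $ b0 \<noteq> 0"
    using y0 yc by (metis carrier_vecD eq_vecI index_zero_vec(1) index_zero_vec(2))
  have "(\<Sum>b<m. X a b * y $ b) = Re c * y $ a" if a: "a < m" for a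
  proof -
    have "(XJ *\<^sub>v y) $ a = (Re c \<cdot>\<^sub>v y) $ a" using yev by simp
    then show ?thesis using a yc XJ unfolding XJ_def
      by (simp add: scalar_prod_def atLeast0LessThan)
  qed
  then show ?thesis using b0 by blast
qed

definition mv :: "nat \<Rightarrow> (nat \<Rightarrow> nat \<Rightarrow> real) \<Rightarrow> (nat \<Rightarrow> real) \<Rightarrow> nat \<Rightarrow> real" where
  "mv m X x = (\<lambda>a. \<Sum>b<m. X a b * x b)"

lemma ip_comm: "ip m x y = ip m y x"
  unfolding ip_def by (simp add: mult.commute)

lemma ip_cong: "(\<And>a. a < m \<Longrightarrow> x a = x' a) \<Longrightarrow> (\<And>a. a < m \<Longrightarrow> y a = y' a) \<Longrightarrow> ip m x y = ip m x' y'"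
  unfolding ip_def by (intro sum.cong) auto

lemma ip_lincomb_left:
  "finite I \<Longrightarrow> ip m (\<lambda>a. \<Sum>i\<in>I. c i * g i a) y = (\<Sum>i\<in>I. c i * ip m (g i) y)"
proof -
  have "ip m (\<lambda>a. \<Sum>i\<in>I. c i * g i a) y = (\<Sum>a<m. \<Sum>i\<in>I. c i * (g i a * y a))"
    unfolding ip_def by (simp add: sum_distrib_left sum_distrib_right mult_ac)
  also have "\<dots> = (\<Sum>i\<in>I. \<Sum>a<m. c i * (g i a * y a))" by (rule sum.swap)
  also have "\<dots> = (\<Sum>i\<in>I. c i * ip m (g i) y)" unfolding ip_def by (simp add: sum_distrib_left)
  finally show ?thesis .
qed

lemma ip_lincomb_right:
  assumes "finite I" shows "ip m y (\<lambda>a. \<Sum>i\<in>I. c i * g i a) = (\<Sum>i\<in>I. c i * ip m y (g i))"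
proof -
  have "ip m y (\<lambda>a. \<Sum>i\<in>I. c i * g i a) = ip m (\<lambda>a. \<Sum>i\<in>I. c i * g i a) y" by (rule ip_comm)
  also have "\<dots> = (\<Sum>i\<in>I. c i * ip m (g i) y)" using ip_lincomb_left assms by blast
  also have "\<dots> = (\<Sum>i\<in>I. c i * ip m y (g i))" by (simp add: ip_comm)
  finally show ?thesis .
qed

lemma ip_scale_left: "ip m (\<lambda>a. t * x a) y = t * ip m x y"
  unfolding ip_def by (simp add: sum_distrib_left mult_ac)

lemma ip_scale_right: "ip m y (\<lambda>a. t * x a) = t * ip m y x"
  unfolding ip_def by (simp add: sum_distrib_left mult_ac)

lemma ip_mv_sym:
  assumes "\<And>a b. a<m \<Longrightarrow> b<m \<Longrightarrow> X a b = X b a"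
  shows "ip m x (mv m X y) = ip m (mv m X x) y"
proof -
  have "ip m x (mv m X y) = (\<Sum>a<m. \<Sum>b<m. x a * X a b * y b)"
    unfolding ip_def mv_def by (simp add: sum_distrib_left mult_ac)
  also have "\<dots> = (\<Sum>b<m. \<Sum>a<m. x a * X a b * y b)" by (rule sum.swap)
  also have "\<dots> = (\<Sum>b<m. (\<Sum>a<m. X b a * x a) * y b)"
    using assms by (intro sum.cong refl) (simp add: sum_distrib_left sum_distrib_right mult_ac)
  also have "\<dots> = ip m (mv m X x) y"
    unfolding ip_def mv_def by simp
  finally show ?thesis .
qed

lemma mv_lincomb:
  "finite I \<Longrightarrow> mv m X (\<lambda>b. \<Sum>i\<in>I. c i * g i b) a = (\<Sum>i\<in>I. c i * mv m X (g i) a)"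
proof -
  have "mv m X (\<lambda>b. \<Sum>i\<in>I. c i * g i b) a = (\<Sum>b<m. \<Sum>i\<in>I. c i * (X a b * g i b))"
    unfolding mv_def by (simp add: sum_distrib_left mult_ac)
  also have "\<dots> = (\<Sum>i\<in>I. \<Sum>b<m. c i * (X a b * g i b))" by (rule sum.swap)
  also have "\<dots> = (\<Sum>i\<in>I. c i * mv m X (g i) a)" unfolding mv_def by (simp add: sum_distrib_left)
  finally show ?thesis .
qed

lemma mv_scale: "mv m X (\<lambda>b. t * x b) a = t * mv m X x a"
  unfolding mv_def by (simp add: sum_distrib_left mult_ac)

lemma mv_cong: "(\<And>b. b < m \<Longrightarrow> x b = x' b) \<Longrightarrow> mv m X x a = mv m X x' a"
  unfolding mv_def by (intro sum.cong) auto

lemma orthon_cong: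
  assumes "orthon m k h" "\<And>i a. i < k \<Longrightarrow> a < m \<Longrightarrow> h i a = h' i a"
  shows "orthon m k h'"
  using assms unfolding orthon_def
  by (metis (no_types, lifting) ip_cong)

lemma delta_sum: "(\<Sum>a<(m::nat). (if i = a then 1 else 0) * x a) = (if i < m then x i else (0::real))"
proof -
  have "(\<Sum>a<m. (if i = a then 1 else 0) * x a) = (\<Sum>a<m. if a = i then x a else 0)"
    by (intro sum.cong) auto
  also have "\<dots> = (if i \<in> {..<m} then x i else 0)" by simp
  finally show ?thesis by simp
qed

lemma basis_with_first:
  assumes m: "0 < m" and z: "ip m z z = 1"
  shows "\<exists>h. orthon m m h \<and> h 0 = z"
proof -
  define u where "u a = z a - (if a = 0 then 1 else 0)" for a :: nat
  define s where "s = ip m u u"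
  define t where "t = 2 / s"
  define hf where "hf i a = (if i = a then 1 else 0) - t * u i * u a" for i a :: nat
  have s_eq: "s = 2 - 2 * z 0"
  proof -
    obtain m' where m': "m = Suc m'" using m by (cases m) auto
    have "s = (z 0 - 1) * (z 0 - 1) + (\<Sum>a<m'. z (Suc a) * z (Suc a))"
      unfolding s_def ip_def u_def m' sum.lessThan_Suc_shift by simp
    moreover have "1 = z 0 * z 0 + (\<Sum>a<m'. z (Suc a) * z (Suc a))"
      using z unfolding ip_def m' sum.lessThan_Suc_shift by simp
    ultimately show ?thesis by (simp add: algebra_simps)
  qed
  have s0: "s \<ge> 0" unfolding s_def ip_def by (intro sum_nonneg) auto
  have orth: "orthon m m hf"
    unfolding orthon_def
  proof (intro allI impI)
    fix i j assume i: "i < m" and j: "j < m"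
    have d1: "(\<Sum>a<m. (if i = a then 1 else 0) * (if j = a then 1 else (0::real))) = (if i = j then 1 else 0)"
      using i j by (simp add: sum.delta if_distrib[where f="\<lambda>t. t * _"] cong: if_cong)
    have d2: "(\<Sum>a<m. (if i = a then 1 else 0) * u a) = u i" if "i < m" for i
      using delta_sum[where m=m and i=i and x=u] that by simp
    have "ip m (hf i) (hf j) = (\<Sum>a<m. (if i = a then 1 else 0) * (if j = a then 1 else 0))
        - t * u j * (\<Sum>a<m. (if i = a then 1 else 0) * u a) - t * u i * (\<Sum>a<m. (if j = a then 1 else 0) * u a)
        + t * t * u i * u j * s"
      unfolding ip_def hf_def s_def
      by (simp add: algebra_simps sum.distrib sum_subtractf sum_distrib_left)
    also have "\<dots> = (if i = j then 1 else 0) - 2 * t * u i * u j + t * t * s * u i * u j"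
      using d1 d2 i j by (simp add: algebra_simps)
    also have "\<dots> = (if i = j then 1 else 0)"
    proof (cases "s = 0")
      case True then show ?thesis unfolding t_def by simp
    next
      case False then have "t * t * s = 2 * t" unfolding t_def by (simp add: field_simps)
      then have "t * t * s * u i * u j = 2 * t * u i * u j" by simp
      then show ?thesis by linarith
    qed
    finally show "ip m (hf i) (hf j) = (if i = j then 1 else 0)" .
  qed
  have hf0: "hf 0 a = z a" if a: "a < m" for a
  proof (cases "s = 0")
    case True
    then have "\<forall>a<m. u a = 0" unfolding s_def ip_def
      using sum_nonneg_eq_0_iff[of "{..<m}" "\<lambda>a. u a * u a"] by simp
    then show ?thesis unfolding hf_def t_def using True a m by (auto simp: u_def)
  next
    case False
    then have "t * u 0 = -1" unfolding t_def using s_eq by (simp add: u_def field_simps)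
    have "hf 0 a = (if 0 = a then 1 else 0) - (t * u 0) * u a" unfolding hf_def by (simp add: mult.assoc)
    also have "\<dots> = (if 0 = a then 1 else 0) + u a" using \<open>t * u 0 = -1\<close> by simp
    also have "\<dots> = z a" by (simp add: u_def)
    finally show ?thesis .
  qed
  define h where "h i = (if i = 0 then z else hf i)" for i
  have "orthon m m h" by (rule orthon_cong[OF orth]) (auto simp: h_def hf0)
  moreover have "h 0 = z" unfolding h_def by simp
  ultimately show ?thesis by blast
qed

lemma spectral_fun:
  "\<forall>X. (\<forall>a b. a<m \<longrightarrow> b<m \<longrightarrow> X a b = X b a) \<longrightarrow>
     (\<exists>\<psi> lam. orthon m m \<psi> \<and> (\<forall>j<m. \<forall>a<m. mv m X (\<psi> j) a = lam j * \<psi> j a))"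
proof (induction m)
  case 0
  then show ?case unfolding orthon_def by auto
next
  case (Suc k)
  show ?case
  proof (intro allI impI)
    fix X :: "nat \<Rightarrow> nat \<Rightarrow> real"
    let ?m = "Suc k"
    assume symX: "\<forall>a b. a<?m \<longrightarrow> b<?m \<longrightarrow> X a b = X b a"
    then have sym: "\<And>a b. a<?m \<Longrightarrow> b<?m \<Longrightarrow> X a b = X b a" by blast
    obtain \<mu> z0 where nz: "\<exists>a<?m. z0 a \<noteq> 0" and ev0: "\<forall>a<?m. (\<Sum>b<?m. X a b * z0 b) = \<mu> * z0 a"
      using sym_eigen_exists[of ?m X] sym by blast
    define N where "N = ip ?m z0 z0"
    have Npos: "N > 0"
    proof -
      obtain a where a: "a < ?m" "z0 a \<noteq> 0" using nz by blast
      have "0 < z0 a * z0 a" using a(2) by (metis not_real_square_gt_zero)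
      also have "\<dots> \<le> N" unfolding N_def ip_def using a by (intro member_le_sum) auto
      finally show ?thesis .
    qed
    define z where "z a = (1 / sqrt N) * z0 a" for a
    have zz: "ip ?m z z = 1"
      unfolding z_def ip_scale_left ip_scale_right using Npos by (simp add: N_def[symmetric] field_simps)
    have evz: "mv ?m X z a = \<mu> * z a" if "a < ?m" for a
      unfolding z_def mv_scale using ev0 that by (simp add: mv_def)
    obtain h where h: "orthon ?m ?m h" and h0: "h 0 = z" using basis_with_first[OF _ zz] by blast
    have hh: "ip ?m (h i) (h j) = (if i = j then 1 else 0)" if "i < ?m" "j < ?m" for i j
      using h that unfolding orthon_def by blast
    define X'' where "X'' i j = ip ?m (h (Suc i)) (mv ?m X (h (Suc j)))" for i j
    have sym'': "\<forall>a b. a<k \<longrightarrow> b<k \<longrightarrow> X'' a b = X'' b a"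
      unfolding X''_def using ip_mv_sym[of ?m X] sym ip_comm by metis
    obtain \<psi>'' lam2 where orth'': "orthon k k \<psi>''"
      and ev'': "\<forall>j<k. \<forall>a<k. mv k X'' (\<psi>'' j) a = lam2 j * \<psi>'' j a"
      using Suc.IH sym'' by blast
    define \<psi> where "\<psi> j = (if j = 0 then z else (\<lambda>a. \<Sum>i<k. \<psi>'' (j - 1) i * h (Suc i) a))" for j
    define lam where "lam j = (if j = 0 then \<mu> else lam2 (j - 1))" for j
    have psiS: "\<psi> (Suc j) = (\<lambda>a. \<Sum>i<k. \<psi>'' j i * h (Suc i) a)" for j
      unfolding \<psi>_def by simp
    have psi0: "\<psi> 0 = h 0" unfolding \<psi>_def h0 by simp
    have ip_h_psi: "ip ?m (h (Suc i)) (\<psi> (Suc l)) = \<psi>'' l i" if "i < k" for i l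
    proof -
      have "ip ?m (h (Suc i)) (\<psi> (Suc l)) = (\<Sum>i'<k. \<psi>'' l i' * ip ?m (h (Suc i)) (h (Suc i')))"
        unfolding psiS by (rule ip_lincomb_right) simp
      also have "\<dots> = (\<Sum>i'<k. if i' = i then \<psi>'' l i' else 0)"
        using that by (intro sum.cong refl) (auto simp: hh)
      also have "\<dots> = \<psi>'' l i" using that by simp
      finally show ?thesis .
    qed
    have ip_h0_psi: "ip ?m (h 0) (\<psi> (Suc l)) = 0" for l
    proof -
      have "ip ?m (h 0) (\<psi> (Suc l)) = (\<Sum>i'<k. \<psi>'' l i' * ip ?m (h 0) (h (Suc i')))"
        unfolding psiS by (rule ip_lincomb_right) simp
      also have "\<dots> = 0" by (intro sum.neutral) (auto simp: hh)
      finally show ?thesis .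
    qed
    have ip_psi_psi: "ip ?m (\<psi> (Suc j)) (\<psi> (Suc l)) = ip k (\<psi>'' j) (\<psi>'' l)" for j l
    proof -
      have "ip ?m (\<psi> (Suc j)) (\<psi> (Suc l)) = (\<Sum>i<k. \<psi>'' j i * ip ?m (h (Suc i)) (\<psi> (Suc l)))"
        unfolding psiS[of j] by (rule ip_lincomb_left) simp
      also have "\<dots> = (\<Sum>i<k. \<psi>'' j i * \<psi>'' l i)" by (intro sum.cong refl) (simp add: ip_h_psi)
      finally show ?thesis unfolding ip_def .
    qed
    have orth: "orthon ?m ?m \<psi>"
      unfolding orthon_def
    proof (intro allI impI)
      fix i j assume i: "i < ?m" and j: "j < ?m"
      show "ip ?m (\<psi> i) (\<psi> j) = (if i = j then 1 else 0)"
      proof (cases i)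
        case 0
        show ?thesis
        proof (cases j)
          case 0 then show ?thesis using \<open>i = 0\<close> psi0 hh by simp
        next
          case (Suc l) then show ?thesis using \<open>i = 0\<close> psi0 ip_h0_psi by simp
        qed
      next
        case (Suc i')
        show ?thesis
        proof (cases j)
          case 0
          have "ip ?m (\<psi> i) (\<psi> j) = ip ?m (h 0) (\<psi> (Suc i'))"
            using 0 Suc psi0 ip_comm by metis
          then show ?thesis using 0 Suc ip_h0_psi by simp
        next
          case (Suc l) then show ?thesis using \<open>i = Suc i'\<close> ip_psi_psi orth'' i j
            unfolding orthon_def by simp
        qed
      qed
    qed
    have Xh: "mv ?m X (h (Suc i)) a = (\<Sum>l<k. X'' l i * h (Suc l) a)" if i: "i < k" and a: "a < ?m" for i a
    proof -
      have "mv ?m X (h (Suc i)) a = (\<Sum>l<?m. ip ?m (mv ?m X (h (Suc i))) (h l) * h l a)"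
        by (rule expand[OF h a])
      also have "\<dots> = ip ?m (mv ?m X (h (Suc i))) (h 0) * h 0 a
           + (\<Sum>l<k. ip ?m (mv ?m X (h (Suc i))) (h (Suc l)) * h (Suc l) a)"
        by (rule sum.lessThan_Suc_shift)
      also have "ip ?m (mv ?m X (h (Suc i))) (h 0) = 0"
      proof -
        have "ip ?m (mv ?m X (h (Suc i))) (h 0) = ip ?m (h (Suc i)) (mv ?m X (h 0))"
          using ip_mv_sym[of ?m X] sym by metis
        also have "\<dots> = ip ?m (h (Suc i)) (\<lambda>a. \<mu> * h 0 a)"
          by (rule ip_cong) (auto simp: h0 evz)
        also have "\<dots> = 0" unfolding ip_scale_right using hh[of "Suc i" 0] i by simp
        finally show ?thesis .
      qed
      also have "(\<Sum>l<k. ip ?m (mv ?m X (h (Suc i))) (h (Suc l)) * h (Suc l) a) = (\<Sum>l<k. X'' l i * h (Suc l) a)"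
        unfolding X''_def by (intro sum.cong refl) (simp add: ip_comm)
      finally show ?thesis by simp
    qed
    have ev: "mv ?m X (\<psi> j) a = lam j * \<psi> j a" if j: "j < ?m" and a: "a < ?m" for j a
    proof (cases j)
      case 0 then show ?thesis unfolding \<psi>_def lam_def using evz a by simp
    next
      case (Suc j')
      then have j': "j' < k" using j by simp
      have "mv ?m X (\<psi> j) a = (\<Sum>i<k. \<psi>'' j' i * mv ?m X (h (Suc i)) a)"
        unfolding Suc psiS by (rule mv_lincomb) simp
      also have "\<dots> = (\<Sum>i<k. \<Sum>l<k. \<psi>'' j' i * (X'' l i * h (Suc l) a))"
        using a by (intro sum.cong refl) (simp add: Xh sum_distrib_left)
      also have "\<dots> = (\<Sum>l<k. \<Sum>i<k. \<psi>'' j' i * (X'' l i * h (Suc l) a))" by (rule sum.swap)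
      also have "\<dots> = (\<Sum>l<k. mv k X'' (\<psi>'' j') l * h (Suc l) a)"
        unfolding mv_def by (intro sum.cong refl) (simp add: sum_distrib_left sum_distrib_right mult_ac)
      also have "\<dots> = (\<Sum>l<k. lam2 j' * (\<psi>'' j' l * h (Suc l) a))"
        using ev'' j' by (intro sum.cong refl) simp
      also have "\<dots> = lam j * \<psi> j a" unfolding Suc psiS lam_def by (simp add: sum_distrib_left)
      finally show ?thesis .
    qed
    show "\<exists>\<psi> lam. orthon ?m ?m \<psi> \<and> (\<forall>j<?m. \<forall>a<?m. mv ?m X (\<psi> j) a = lam j * \<psi> j a)"
      using orth ev by blast
  qed
qed

lemma proots_lin: "proots (\<Prod>a\<leftarrow>xs. [:- a, 1:]) = mset (xs :: real list)"
proof (induction xs)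
  case Nil then show ?case by simp
next
  case (Cons x xs)
  have nz: "(\<Prod>a\<leftarrow>xs. [:- a, 1:]) \<noteq> 0" by (auto simp: prod_list_zero_iff)
  have "proots ([:- x, 1:] * (\<Prod>a\<leftarrow>xs. [:- a, 1:])) = proots [:- x, 1:] + proots (\<Prod>a\<leftarrow>xs. [:- a, 1:])"
    by (rule proots_mult) (use nz in auto)
  then have "proots (\<Prod>a\<leftarrow>x # xs. [:- a, 1:]) = proots [:- x, 1:] + proots (\<Prod>a\<leftarrow>xs. [:- a, 1:])"
    by simp
  then show ?case using Cons by (simp add: proots_linear_factor)
qed

lemma sv_spectral:
  fixes M :: "real mat"
  assumes M: "M \<in> carrier_mat r d"
  shows "\<exists>\<psi> lam. orthon d d \<psi> \<and>
     (\<forall>j<d. \<forall>a<d. mv d (\<lambda>a b. \<Sum>t<r. M $$ (t,a) * M $$ (t,b)) (\<psi> j) a = lam j * \<psi> j a) \<and>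
     singular_values M = image_mset sqrt (mset (map lam [0..<d]))"
proof -
  define X where "X a b = (\<Sum>t<r. M $$ (t,a) * M $$ (t,b))" for a b
  have sym: "\<forall>a b. a<d \<longrightarrow> b<d \<longrightarrow> X a b = X b a" unfolding X_def by (simp add: mult.commute)
  obtain \<psi> lam where orth: "orthon d d \<psi>" and ev: "\<forall>j<d. \<forall>a<d. mv d X (\<psi> j) a = lam j * \<psi> j a"
    using spectral_fun sym by blast
  define XJ where "XJ = transpose_mat M * M"
  have XJ: "XJ \<in> carrier_mat d d" unfolding XJ_def using M by simp
  have XJe: "XJ $$ (a,b) = X a b" if "a < d" "b < d" for a b
    unfolding XJ_def X_def using that M by (simp add: scalar_prod_def atLeast0LessThan)
  have Xdec: "X a b = (\<Sum>j<d. \<psi> j a * lam j * \<psi> j b)" if a: "a < d" and b: "b < d" for a b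
  proof -
    have "X a b = (\<Sum>c<d. X a c * (if c = b then 1 else 0))" using b by (simp add: if_distrib cong: if_cong)
    also have "\<dots> = (\<Sum>c<d. X a c * (\<Sum>j<d. \<psi> j c * \<psi> j b))"
      using complete[OF orth] b by (intro sum.cong refl) simp
    also have "\<dots> = (\<Sum>c<d. \<Sum>j<d. X a c * \<psi> j c * \<psi> j b)" by (simp add: sum_distrib_left mult_ac)
    also have "\<dots> = (\<Sum>j<d. \<Sum>c<d. X a c * \<psi> j c * \<psi> j b)" by (rule sum.swap)
    also have "\<dots> = (\<Sum>j<d. mv d X (\<psi> j) a * \<psi> j b)" unfolding mv_def by (simp add: sum_distrib_right)
    also have "\<dots> = (\<Sum>j<d. \<psi> j a * lam j * \<psi> j b)" using ev a by (intro sum.cong refl) (simp add: mult_ac)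
    finally show ?thesis .
  qed
  define Q where "Q = mat d d (\<lambda>(a,j). \<psi> j a)"
  define D where "D = mat d d (\<lambda>(i,j). if i = j then lam i else 0)"
  have Q: "Q \<in> carrier_mat d d" and QT: "transpose_mat Q \<in> carrier_mat d d" and D: "D \<in> carrier_mat d d"
    unfolding Q_def D_def by auto
  have QQT: "Q * transpose_mat Q = 1\<^sub>m d"
  proof (rule eq_matI)
    fix a b assume ab: "a < dim_row (1\<^sub>m d)" "b < dim_col (1\<^sub>m d)"
    have "(Q * transpose_mat Q) $$ (a,b) = (\<Sum>j<d. \<psi> j a * \<psi> j b)"
      using ab unfolding Q_def by (simp add: scalar_prod_def atLeast0LessThan)
    also have "\<dots> = 1\<^sub>m d $$ (a,b)" using complete[OF orth] ab by simp
    finally show "(Q * transpose_mat Q) $$ (a,b) = 1\<^sub>m d $$ (a,b)" .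
  qed (auto simp: Q_def)
  have QTQ: "transpose_mat Q * Q = 1\<^sub>m d"
  proof (rule eq_matI)
    fix a b assume ab: "a < dim_row (1\<^sub>m d)" "b < dim_col (1\<^sub>m d)"
    have "(transpose_mat Q * Q) $$ (a,b) = ip d (\<psi> a) (\<psi> b)"
      using ab unfolding Q_def by (simp add: scalar_prod_def atLeast0LessThan ip_def)
    also have "\<dots> = 1\<^sub>m d $$ (a,b)" using orth ab unfolding orthon_def by simp
    finally show "(transpose_mat Q * Q) $$ (a,b) = 1\<^sub>m d $$ (a,b)" .
  qed (auto simp: Q_def)
  have QD: "(Q * D) $$ (a,c) = \<psi> c a * lam c" if "a < d" "c < d" for a c
  proof -
    have "(Q * D) $$ (a,c) = (\<Sum>j<d. \<psi> j a * (if j = c then lam j else 0))"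
      using that unfolding Q_def D_def by (simp add: scalar_prod_def atLeast0LessThan)
    also have "\<dots> = (\<Sum>j<d. if j = c then \<psi> j a * lam j else 0)" by (intro sum.cong) auto
    also have "\<dots> = \<psi> c a * lam c" using that by simp
    finally show ?thesis .
  qed
  have XQDQ: "XJ = Q * D * transpose_mat Q"
  proof (rule eq_matI)
    fix a b assume ab: "a < dim_row (Q * D * transpose_mat Q)" "b < dim_col (Q * D * transpose_mat Q)"
    then have a: "a < d" and b: "b < d" unfolding Q_def D_def by auto
    have "(Q * D * transpose_mat Q) $$ (a,b) = (\<Sum>c<d. (Q * D) $$ (a,c) * \<psi> c b)"
      using a b Q D unfolding Q_def[of] by (simp add: scalar_prod_def atLeast0LessThan Q_def)
    also have "\<dots> = (\<Sum>c<d. \<psi> c a * lam c * \<psi> c b)" using a QD by (intro sum.cong refl) simp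
    also have "\<dots> = XJ $$ (a,b)" using Xdec[OF a b] XJe[OF a b] by simp
    finally show "XJ $$ (a,b) = (Q * D * transpose_mat Q) $$ (a,b)" by simp
  qed (use XJ Q D in auto)
  have "similar_mat_wit XJ D Q (transpose_mat Q)"
    unfolding similar_mat_wit_def Let_def using XJ Q QT D QQT QTQ XQDQ by auto
  then have "similar_mat XJ D" unfolding similar_mat_def by blast
  then have "char_poly XJ = char_poly D" by (rule char_poly_similar)
  also have "\<dots> = (\<Prod>a\<leftarrow>diag_mat D. [:- a, 1:])"
    by (rule char_poly_upper_triangular[OF D]) (auto simp: upper_triangular_def D_def)
  finally have cp: "char_poly XJ = (\<Prod>a\<leftarrow>diag_mat D. [:- a, 1:])" .
  have dD: "diag_mat D = map lam [0..<d]" unfolding diag_mat_def D_def by simp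
  have "proots (char_poly XJ) = mset (map lam [0..<d])" unfolding cp dD by (rule proots_lin)
  then have "singular_values M = image_mset sqrt (mset (map lam [0..<d]))"
    unfolding singular_values_def XJ_def by simp
  then show ?thesis using orth ev unfolding X_def by blast
qed

lemma sum_sv:
  assumes "singular_values M = image_mset sqrt (mset (map lam [0..<d]))"
  shows "(\<Sum>\<sigma>\<in>#singular_values M. \<sigma> powr p) = (\<Sum>j<d. sqrt (lam j) powr p)"
proof -
  have "image_mset (\<lambda>\<sigma>. \<sigma> powr p) (singular_values M) = mset (map (\<lambda>j. sqrt (lam j) powr p) [0..<d])"
    unfolding assms by (simp only: mset_map[symmetric] map_map o_def)
  then have "(\<Sum>\<sigma>\<in>#singular_values M. \<sigma> powr p) = sum_list (map (\<lambda>j. sqrt (lam j) powr p) [0..<d])"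
    by (simp only: sum_mset_sum_list)
  also have "\<dots> = (\<Sum>j<d. sqrt (lam j) powr p)"
    by (simp only: interv_sum_list_conv_sum_set_nat set_upt atLeast0LessThan)
  finally show ?thesis .
qed

lemma powr_tangent:
  fixes p x t :: real
  assumes p: "p \<ge> 1" and x: "x \<ge> 0" and t: "t \<ge> 0"
  shows "t powr p + p * t powr (p - 1) * (x - t) \<le> x powr p"
proof (cases "t = 0")
  case True then show ?thesis by simp
next
  case False
  then have t0: "t > 0" using t by simp
  have der: "((\<lambda>y. y powr p) has_real_derivative p * y powr (p - 1)) (at y)" if "0 < y" for y
    using that by (auto intro!: derivative_eq_intros)
  consider "x = t" | "x > t" | "x < t" by linarith
  then show ?thesis
  proof cases
    case 1 then show ?thesis by simp
  next
    case 2
    obtain \<xi> where \<xi>: "t < \<xi>" "\<xi> < x" "x powr p - t powr p = (x - t) * (p * \<xi> powr (p - 1))"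
      using MVT2[of t x "\<lambda>y. y powr p" "\<lambda>y. p * y powr (p - 1)"] 2 t0 der by force
    have "t powr (p - 1) \<le> \<xi> powr (p - 1)" using \<xi> t0 p by (intro powr_mono2) auto
    then have "p * t powr (p - 1) * (x - t) \<le> p * \<xi> powr (p - 1) * (x - t)"
      using 2 p by (intro mult_right_mono mult_left_mono) auto
    then show ?thesis using \<xi>(3) by (simp add: algebra_simps)
  next
    case 3
    show ?thesis
    proof (cases "x = 0")
      case True
      have "t powr p = t powr (p - 1) * t" using t0 by (simp add: powr_diff)
      then have "t powr p + p * t powr (p - 1) * (x - t) = (1 - p) * t powr p" using True by (simp add: algebra_simps)
      also have "\<dots> \<le> 0" using p by (intro mult_nonpos_nonneg) auto
      finally show ?thesis using True by simp
    next
      case False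
      then have x0: "x > 0" using x by simp
      obtain \<xi> where \<xi>: "x < \<xi>" "\<xi> < t" "t powr p - x powr p = (t - x) * (p * \<xi> powr (p - 1))"
        using MVT2[of x t "\<lambda>y. y powr p" "\<lambda>y. p * y powr (p - 1)"] 3 x0 der by force
      have "\<xi> powr (p - 1) \<le> t powr (p - 1)" using \<xi> x0 p by (intro powr_mono2) auto
      then have "p * \<xi> powr (p - 1) * (t - x) \<le> p * t powr (p - 1) * (t - x)"
        using 3 p by (intro mult_right_mono mult_left_mono) auto
      then show ?thesis using \<xi>(3) by (simp add: algebra_simps)
    qed
  qed
qed

lemma jensen_sub:
  fixes m \<sigma> :: "'j \<Rightarrow> real"
  assumes J: "finite J" and m: "\<And>j. j \<in> J \<Longrightarrow> m j \<ge> 0" and S: "(\<Sum>j\<in>J. m j) \<le> 1"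
    and \<sigma>: "\<And>j. j \<in> J \<Longrightarrow> \<sigma> j \<ge> 0" and p: "p \<ge> 1"
  shows "(\<Sum>j\<in>J. m j * \<sigma> j) powr p \<le> (\<Sum>j\<in>J. m j * \<sigma> j powr p)"
proof -
  define t where "t = (\<Sum>j\<in>J. m j * \<sigma> j)"
  define S where "S = (\<Sum>j\<in>J. m j)"
  have t0: "t \<ge> 0" unfolding t_def using m \<sigma> by (intro sum_nonneg) auto
  have "(\<Sum>j\<in>J. m j * (t powr p + p * t powr (p - 1) * (\<sigma> j - t))) \<le> (\<Sum>j\<in>J. m j * \<sigma> j powr p)"
    using m \<sigma> p t0 powr_tangent by (intro sum_mono mult_left_mono) auto
  moreover have "(\<Sum>j\<in>J. m j * (t powr p + p * t powr (p - 1) * (\<sigma> j - t)))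
      = S * t powr p + p * t powr (p - 1) * (t - S * t)"
  proof -
    have gen: "(\<Sum>j\<in>J. m j * (A + B * (\<sigma> j - t))) = A * (\<Sum>j\<in>J. m j) + B * ((\<Sum>j\<in>J. m j * \<sigma> j) - t * (\<Sum>j\<in>J. m j))" for A B
      by (simp add: algebra_simps sum.distrib sum_subtractf sum_distrib_left sum_distrib_right)
    show ?thesis unfolding gen t_def[symmetric] S_def[symmetric] by (simp add: algebra_simps)
  qed
  moreover have "t powr p \<le> S * t powr p + p * t powr (p - 1) * (t - S * t)"
  proof (cases "t = 0")
    case True then show ?thesis by simp
  next
    case False
    then have "t powr (p - 1) * t = t powr p" using t0 by (simp add: powr_diff)
    then have "S * t powr p + p * t powr (p - 1) * (t - S * t) = t powr p * (S + p * (1 - S))"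
      by (simp add: algebra_simps)
    moreover have "S + p * (1 - S) \<ge> 1"
    proof -
      have "(p - 1) * (1 - S) \<ge> 0" using p S unfolding S_def by simp
      then show ?thesis by (simp add: algebra_simps)
    qed
    ultimately show ?thesis by (metis mult_left_mono mult.right_neutral powr_ge_zero)
  qed
  ultimately show ?thesis unfolding t_def by linarith
qed

lemma gram:
  "ip n (mv d Af x) (mv d Af y) = ip d x (mv d (\<lambda>a b. \<Sum>t<n. Af t a * Af t b) y)"
proof -
  have "ip n (mv d Af x) (mv d Af y) = (\<Sum>t<n. \<Sum>b<d. \<Sum>a<d. x a * (Af t a * Af t b * y b))"
    unfolding ip_def mv_def by (simp add: sum_distrib_left sum_distrib_right mult_ac)
  also have "\<dots> = (\<Sum>t<n. \<Sum>a<d. \<Sum>b<d. x a * (Af t a * Af t b * y b))"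
    by (intro sum.cong refl sum.swap)
  also have "\<dots> = (\<Sum>a<d. \<Sum>t<n. \<Sum>b<d. x a * (Af t a * Af t b * y b))" by (rule sum.swap)
  also have "\<dots> = (\<Sum>a<d. \<Sum>b<d. \<Sum>t<n. x a * (Af t a * Af t b * y b))"
    by (intro sum.cong refl sum.swap)
  also have "\<dots> = ip d x (mv d (\<lambda>a b. \<Sum>t<n. Af t a * Af t b) y)"
    unfolding ip_def mv_def by (simp add: sum_distrib_left sum_distrib_right mult_ac)
  finally show ?thesis .
qed

lemma main_ineq:
  fixes Af :: "nat \<Rightarrow> nat \<Rightarrow> real" and u e :: "'k \<Rightarrow> nat \<Rightarrow> real"
  assumes orth: "orthon d d \<psi>"
    and ev: "\<forall>j<d. \<forall>a<d. mv d (\<lambda>a b. \<Sum>t<n. Af t a * Af t b) (\<psi> j) a = lam j * \<psi> j a"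
    and p: "p \<ge> 1" and K: "finite K"
    and ou: "\<And>i j. i \<in> K \<Longrightarrow> j \<in> K \<Longrightarrow> ip n (u i) (u j) = (if i = j then 1 else 0)"
    and oe: "\<And>i j. i \<in> K \<Longrightarrow> j \<in> K \<Longrightarrow> ip d (e i) (e j) = (if i = j then 1 else 0)"
  shows "(\<Sum>i\<in>K. \<bar>ip n (u i) (mv d Af (e i))\<bar> powr p) \<le> (\<Sum>j<d. sqrt (lam j) powr p)"
proof -
  define X where "X = (\<lambda>a b. \<Sum>t<n. Af t a * Af t b)"
  define A\<psi> where "A\<psi> j = mv d Af (\<psi> j)" for j
  have G: "ip n (A\<psi> i) (A\<psi> j) = (if i = j then lam j else 0)" if "i < d" "j < d" for i j
  proof -
    have "ip n (A\<psi> i) (A\<psi> j) = ip d (\<psi> i) (mv d X (\<psi> j))" unfolding A\<psi>_def X_def by (rule gram)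
    also have "\<dots> = ip d (\<psi> i) (\<lambda>a. lam j * \<psi> j a)" using ev that unfolding X_def by (intro ip_cong) auto
    also have "\<dots> = lam j * ip d (\<psi> i) (\<psi> j)" by (rule ip_scale_right)
    finally show ?thesis using orth that unfolding orthon_def by simp
  qed
  have lam0: "lam j \<ge> 0" if "j < d" for j
  proof -
    have "0 \<le> ip n (A\<psi> j) (A\<psi> j)" unfolding ip_def by (intro sum_nonneg) auto
    then show ?thesis using G[OF that that] by simp
  qed
  define \<sigma> where "\<sigma> j = sqrt (lam j)" for j
  have Azero: "A\<psi> j t = 0" if "j < d" "lam j = 0" "t < n" for j t
  proof -
    have "(\<Sum>t<n. A\<psi> j t * A\<psi> j t) = 0" using G[of j j] that unfolding ip_def by simp
    then have "\<forall>t\<in>{..<n}. A\<psi> j t * A\<psi> j t = 0" by (subst sum_nonneg_eq_0_iff[symmetric]) auto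
    then show ?thesis using that by simp
  qed
  define Jp where "Jp = {j. j < d \<and> lam j > 0}"
  have Jp: "finite Jp" unfolding Jp_def by simp
  define \<phi> where "\<phi> j = (\<lambda>t. (1 / \<sigma> j) * A\<psi> j t)" for j
  have \<phi>orth: "ip n (\<phi> i) (\<phi> j) = (if i = j then 1 else 0)" if "i \<in> Jp" "j \<in> Jp" for i j
  proof -
    have "ip n (\<phi> i) (\<phi> j) = (1 / \<sigma> i) * (1 / \<sigma> j) * ip n (A\<psi> i) (A\<psi> j)"
      unfolding \<phi>_def ip_scale_left ip_scale_right by simp
    also have "\<dots> = (if i = j then 1 else 0)" using that G[of i j] unfolding Jp_def \<sigma>_def
      by (auto simp: field_simps)
    finally show ?thesis .
  qed
  define c0 where "c0 i j = (if lam j > 0 then ip n (u i) (\<phi> j) else 0)" for i j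
  have key1: "ip n (u i) (A\<psi> j) = \<sigma> j * c0 i j" if j: "j < d" for i j
  proof (cases "lam j > 0")
    case True
    have "ip n (u i) (A\<psi> j) = ip n (u i) (\<lambda>t. \<sigma> j * \<phi> j t)"
      using True unfolding \<phi>_def \<sigma>_def by (intro ip_cong) auto
    then show ?thesis using True unfolding c0_def ip_scale_right by simp
  next
    case False
    then have "lam j = 0" using lam0[OF j] by simp
    then have "ip n (u i) (A\<psi> j) = ip n (u i) (\<lambda>t. 0)" using Azero j by (intro ip_cong) auto
    then show ?thesis using False unfolding c0_def ip_def by simp
  qed
  have decomp: "ip n (u i) (mv d Af (e i)) = (\<Sum>j<d. ip d (e i) (\<psi> j) * (\<sigma> j * c0 i j))" for i
  proof -
    have "mv d Af (e i) t = mv d Af (\<lambda>a. \<Sum>j<d. ip d (e i) (\<psi> j) * \<psi> j a) t" for t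
      by (rule mv_cong) (rule expand[OF orth])
    also have "\<dots> t = (\<Sum>j<d. ip d (e i) (\<psi> j) * A\<psi> j t)" for t
      unfolding A\<psi>_def by (rule mv_lincomb) simp
    finally have "ip n (u i) (mv d Af (e i)) = ip n (u i) (\<lambda>t. \<Sum>j<d. ip d (e i) (\<psi> j) * A\<psi> j t)"
      by (intro ip_cong) auto
    also have "\<dots> = (\<Sum>j<d. ip d (e i) (\<psi> j) * ip n (u i) (A\<psi> j))" by (rule ip_lincomb_right) simp
    also have "\<dots> = (\<Sum>j<d. ip d (e i) (\<psi> j) * (\<sigma> j * c0 i j))" using key1 by (intro sum.cong) auto
    finally show ?thesis .
  qed
  define b where "b i j = \<bar>ip d (e i) (\<psi> j)\<bar>" for i j
  define c where "c i j = \<bar>c0 i j\<bar>" for i j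
  define mm where "mm i j = ((b i j)\<^sup>2 + (c i j)\<^sup>2) / 2" for i j
  have \<sigma>0: "\<sigma> j \<ge> 0" if "j < d" for j unfolding \<sigma>_def using lam0[OF that] by simp
  have bound1: "\<bar>ip n (u i) (mv d Af (e i))\<bar> \<le> (\<Sum>j<d. mm i j * \<sigma> j)" for i
  proof -
    have "\<bar>ip n (u i) (mv d Af (e i))\<bar> \<le> (\<Sum>j<d. \<bar>ip d (e i) (\<psi> j) * (\<sigma> j * c0 i j)\<bar>)"
      unfolding decomp by (rule sum_abs)
    also have "\<dots> = (\<Sum>j<d. \<sigma> j * (b i j * c i j))"
      unfolding b_def c_def using \<sigma>0 by (intro sum.cong refl) (simp add: abs_mult)
    also have "\<dots> \<le> (\<Sum>j<d. \<sigma> j * mm i j)"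
    proof (rule sum_mono)
      fix j assume "j \<in> {..<d}"
      then have s0: "\<sigma> j \<ge> 0" using \<sigma>0 by simp
      have "0 \<le> (b i j - c i j)\<^sup>2" by simp
      then have "b i j * c i j \<le> mm i j" unfolding mm_def by (simp add: power2_eq_square algebra_simps)
      then show "\<sigma> j * (b i j * c i j) \<le> \<sigma> j * mm i j" using s0 by (rule mult_left_mono)
    qed
    finally show ?thesis by (simp add: mult.commute)
  qed
  have csq: "(c i j)\<^sup>2 = (if lam j > 0 then (ip n (u i) (\<phi> j))\<^sup>2 else 0)" for i j
    unfolding c_def c0_def by simp
  have rowsum: "(\<Sum>j<d. mm i j) \<le> 1" if i: "i \<in> K" for i
  proof -
    have "(\<Sum>j<d. (b i j)\<^sup>2) = ip d (e i) (e i)"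
      unfolding b_def power2_abs parseval[OF orth, of "e i" "e i"] by (simp add: power2_eq_square)
    also have "\<dots> = 1" using oe[OF i i] by simp
    finally have 1: "(\<Sum>j<d. (b i j)\<^sup>2) = 1" .
    have "(\<Sum>j<d. (c i j)\<^sup>2) = (\<Sum>j\<in>Jp. (ip n (u i) (\<phi> j))\<^sup>2)"
      unfolding csq Jp_def by (simp add: sum.inter_filter[symmetric] lessThan_def)
    also have "\<dots> \<le> ip n (u i) (u i)" by (rule bessel[OF Jp \<phi>orth])
    also have "\<dots> = 1" using ou[OF i i] by simp
    finally have 2: "(\<Sum>j<d. (c i j)\<^sup>2) \<le> 1" .
    show ?thesis using 1 2 unfolding mm_def by (simp add: sum_divide_distrib[symmetric] sum.distrib)
  qed
  have colsum: "(\<Sum>i\<in>K. mm i j) \<le> 1" if j: "j < d" for j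
  proof -
    have "(\<Sum>i\<in>K. (b i j)\<^sup>2) = (\<Sum>i\<in>K. (ip d (\<psi> j) (e i))\<^sup>2)"
      unfolding b_def power2_abs by (simp add: ip_comm)
    also have "\<dots> \<le> ip d (\<psi> j) (\<psi> j)" by (rule bessel[OF K oe])
    also have "\<dots> = 1" using orth j unfolding orthon_def by simp
    finally have 1: "(\<Sum>i\<in>K. (b i j)\<^sup>2) \<le> 1" .
    have 2: "(\<Sum>i\<in>K. (c i j)\<^sup>2) \<le> 1"
    proof (cases "lam j > 0")
      case True
      then have jJ: "j \<in> Jp" using j unfolding Jp_def by simp
      have "(\<Sum>i\<in>K. (c i j)\<^sup>2) = (\<Sum>i\<in>K. (ip n (\<phi> j) (u i))\<^sup>2)"
        unfolding csq using True by (simp add: ip_comm)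
      also have "\<dots> \<le> ip n (\<phi> j) (\<phi> j)" by (rule bessel[OF K ou])
      also have "\<dots> = 1" using \<phi>orth[OF jJ jJ] by simp
      finally show ?thesis .
    next
      case False then show ?thesis unfolding csq by simp
    qed
    show ?thesis using 1 2 unfolding mm_def by (simp add: sum_divide_distrib[symmetric] sum.distrib)
  qed
  have mm0: "mm i j \<ge> 0" for i j unfolding mm_def by simp
  have "(\<Sum>i\<in>K. \<bar>ip n (u i) (mv d Af (e i))\<bar> powr p) \<le> (\<Sum>i\<in>K. (\<Sum>j<d. mm i j * \<sigma> j) powr p)"
    using bound1 p by (intro sum_mono powr_mono2) auto
  also have "\<dots> \<le> (\<Sum>i\<in>K. \<Sum>j<d. mm i j * \<sigma> j powr p)"
    using rowsum p mm0 \<sigma>0 by (intro sum_mono jensen_sub) auto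
  also have "\<dots> = (\<Sum>j<d. (\<Sum>i\<in>K. mm i j) * \<sigma> j powr p)"
    by (subst sum.swap) (simp add: sum_distrib_right)
  also have "\<dots> \<le> (\<Sum>j<d. 1 * \<sigma> j powr p)"
    using colsum by (intro sum_mono mult_right_mono) auto
  finally show ?thesis unfolding \<sigma>_def by simp
qed

lemma W_part:
  fixes Wf :: "nat \<Rightarrow> nat \<Rightarrow> real"
  assumes orth: "orthon d d \<psi>"
    and ev: "\<forall>j<d. \<forall>a<d. mv d (\<lambda>a b. \<Sum>t<n. Wf t a * Wf t b) (\<psi> j) a = lam j * \<psi> j a"
    and Wf: "\<And>t x. t < n \<Longrightarrow> x < d \<Longrightarrow> Wf t x = wv t * af x"
    and ww: "ip n wv wv = 1" and p: "p \<ge> 1"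
  shows "(\<Sum>j<d. sqrt (lam j) powr p) \<le> sqrt (ip d af af) powr p"
proof -
  define q where "q j = ip d af (\<psi> j)" for j
  have XW: "(\<Sum>t<n. Wf t a * Wf t b) = af a * af b" if "a < d" "b < d" for a b
  proof -
    have "(\<Sum>t<n. Wf t a * Wf t b) = (\<Sum>t<n. (af a * af b) * (wv t * wv t))"
      using Wf that by (intro sum.cong) auto
    also have "\<dots> = af a * af b * ip n wv wv" unfolding ip_def by (simp add: sum_distrib_left)
    finally show ?thesis using ww by simp
  qed
  have evq: "lam j * \<psi> j a = q j * af a" if j: "j < d" and a: "a < d" for j a
  proof -
    have "lam j * \<psi> j a = mv d (\<lambda>a b. \<Sum>t<n. Wf t a * Wf t b) (\<psi> j) a" using ev j a by simp
    also have "\<dots> = (\<Sum>b<d. af a * af b * \<psi> j b)" unfolding mv_def using XW a by (intro sum.cong) auto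
    also have "\<dots> = q j * af a" unfolding q_def ip_def by (simp add: sum_distrib_left mult_ac)
    finally show ?thesis .
  qed
  have lamq: "lam j = q j * q j" if j: "j < d" for j
  proof -
    have "lam j = lam j * ip d (\<psi> j) (\<psi> j)" using orth j unfolding orthon_def by simp
    also have "\<dots> = ip d (\<psi> j) (\<lambda>a. lam j * \<psi> j a)" by (simp add: ip_scale_right)
    also have "\<dots> = ip d (\<psi> j) (\<lambda>a. q j * af a)" using evq j by (intro ip_cong) auto
    also have "\<dots> = q j * q j" unfolding ip_scale_right q_def by (simp add: ip_comm)
    finally show ?thesis .
  qed
  have par: "ip d af af = (\<Sum>j<d. q j * q j)" unfolding q_def by (rule parseval[OF orth])
  have qle: "q j * q j \<le> ip d af af" if "j < d" for j
    unfolding par using that by (intro member_le_sum) auto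
  define P where "P = {j. j < d \<and> lam j \<noteq> 0}"
  have Pfin: "finite P" unfolding P_def by simp
  have Puniq: "j = k" if "j \<in> P" "k \<in> P" for j k
  proof (rule ccontr)
    assume jk: "j \<noteq> k"
    have j: "j < d" "lam j \<noteq> 0" and k: "k < d" "lam k \<noteq> 0" using that unfolding P_def by auto
    have "ip d (\<psi> j) (\<psi> k) = 0" using orth j k jk unfolding orthon_def by simp
    moreover have "ip d (\<psi> j) (\<psi> k) = ip d (\<lambda>a. (q j / lam j) * af a) (\<lambda>a. (q k / lam k) * af a)"
      using evq j k by (intro ip_cong) (auto simp: field_simps)
    moreover have "\<dots> = (q j / lam j) * (q k / lam k) * ip d af af"
      by (simp only: ip_scale_left ip_scale_right mult.assoc)
    moreover have "q j \<noteq> 0" "q k \<noteq> 0" using lamq j k by auto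
    moreover have "ip d af af > 0"
    proof -
      have "q j * q j > 0" using \<open>q j \<noteq> 0\<close> by (metis not_real_square_gt_zero)
      then show ?thesis using qle[OF j(1)] by linarith
    qed
    ultimately show False using j k by simp
  qed
  have cardP: "card P \<le> 1" using card_le_Suc0_iff_eq[OF Pfin] Puniq by auto
  have "(\<Sum>j<d. sqrt (lam j) powr p) = (\<Sum>j\<in>P. sqrt (lam j) powr p)"
  proof -
    have "(\<Sum>j<d. sqrt (lam j) powr p) = (\<Sum>j<d. if lam j \<noteq> 0 then sqrt (lam j) powr p else 0)"
      by (intro sum.cong) auto
    also have "\<dots> = (\<Sum>j\<in>P. sqrt (lam j) powr p)"
      unfolding P_def by (simp add: sum.inter_filter[symmetric] lessThan_def)
    finally show ?thesis .
  qed
  also have "\<dots> \<le> of_nat (card P) * sqrt (ip d af af) powr p"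
  proof (rule sum_bounded_above)
    fix j assume "j \<in> P"
    then have j: "j < d" unfolding P_def by simp
    have "sqrt (lam j) \<le> sqrt (ip d af af)" unfolding lamq[OF j] using qle[OF j] by (rule real_sqrt_le_mono)
    then show "sqrt (lam j) powr p \<le> sqrt (ip d af af) powr p"
      using p lamq[OF j] by (intro powr_mono2) auto
  qed
  also have "\<dots> \<le> 1 * sqrt (ip d af af) powr p"
    using cardP by (intro mult_right_mono) auto
  finally show ?thesis by simp
qed

lemma mv_XB: "mv d (\<lambda>a b. \<Sum>t<n. Bf t a * Bf t b) x a = (\<Sum>t<n. Bf t a * mv d Bf x t)"
proof -
  have "mv d (\<lambda>a b. \<Sum>t<n. Bf t a * Bf t b) x a = (\<Sum>b<d. \<Sum>t<n. Bf t a * (Bf t b * x b))"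
    unfolding mv_def by (simp add: sum_distrib_left sum_distrib_right mult_ac)
  also have "\<dots> = (\<Sum>t<n. \<Sum>b<d. Bf t a * (Bf t b * x b))" by (rule sum.swap)
  also have "\<dots> = (\<Sum>t<n. Bf t a * mv d Bf x t)" unfolding mv_def by (simp add: sum_distrib_left)
  finally show ?thesis .
qed

lemma B_part:
  fixes Af Bf :: "nat \<Rightarrow> nat \<Rightarrow> real" and wv vf :: "nat \<Rightarrow> real"
  assumes orthA: "orthon d d \<psi>"
    and evA: "\<forall>j<d. \<forall>a<d. mv d (\<lambda>a b. \<Sum>t<n. Af t a * Af t b) (\<psi> j) a = lam j * \<psi> j a"
    and orthB: "orthon d d \<psi>'"
    and evB: "\<forall>j<d. \<forall>a<d. mv d (\<lambda>a b. \<Sum>t<n. Bf t a * Bf t b) (\<psi>' j) a = lam' j * \<psi>' j a"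
    and Bf: "\<And>t x. t < n \<Longrightarrow> x < d \<Longrightarrow> Bf t x = Af t x - mv d Af vf t * vf x"
    and ww: "ip n wv wv = 1" and vv: "ip d vf vf = 1"
    and av: "\<And>x. x < d \<Longrightarrow> \<alpha> * vf x = (\<Sum>t<n. Af t x * wv t)"
    and \<alpha>: "\<alpha> > 0" and p: "p \<ge> 1"
  shows "\<alpha> powr p + (\<Sum>j<d. sqrt (lam' j) powr p) \<le> (\<Sum>j<d. sqrt (lam j) powr p)"
proof -
  define XB where "XB = (\<lambda>a b. \<Sum>t<n. Bf t a * Bf t b)"
  define Av where "Av = mv d Af vf"
  have wAv: "ip n wv Av = \<alpha>"
  proof -
    have "ip n wv Av = (\<Sum>t<n. \<Sum>x<d. vf x * (Af t x * wv t))"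
      unfolding ip_def Av_def mv_def by (simp add: sum_distrib_left mult_ac)
    also have "\<dots> = (\<Sum>x<d. \<Sum>t<n. vf x * (Af t x * wv t))" by (rule sum.swap)
    also have "\<dots> = (\<Sum>x<d. vf x * (\<alpha> * vf x))" using av by (intro sum.cong) (auto simp: sum_distrib_left)
    also have "\<dots> = \<alpha> * ip d vf vf" unfolding ip_def by (simp add: sum_distrib_left mult_ac)
    finally show ?thesis using vv by simp
  qed
  have BTw: "(\<Sum>t<n. Bf t x * wv t) = 0" if x: "x < d" for x
  proof -
    have "(\<Sum>t<n. Bf t x * wv t) = (\<Sum>t<n. Af t x * wv t - vf x * (Av t * wv t))"
      using x unfolding Av_def by (intro sum.cong) (auto simp: Bf algebra_simps)
    also have "\<dots> = (\<Sum>t<n. Af t x * wv t) - vf x * ip n Av wv"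
      unfolding ip_def by (simp add: sum_subtractf sum_distrib_left)
    also have "\<dots> = 0" using av[OF x] wAv by (simp add: ip_comm mult.commute)
    finally show ?thesis .
  qed
  have Bv: "mv d Bf vf t = 0" if t: "t < n" for t
  proof -
    have "mv d Bf vf t = (\<Sum>x<d. Af t x * vf x - Av t * (vf x * vf x))"
      unfolding mv_def using t unfolding Av_def by (intro sum.cong) (auto simp: Bf algebra_simps)
    also have "\<dots> = Av t - Av t * ip d vf vf"
      unfolding ip_def Av_def mv_def by (simp add: sum_subtractf sum_distrib_left)
    finally show ?thesis using vv by simp
  qed
  have XBv: "mv d XB vf a = 0" for a
    unfolding XB_def mv_XB using Bv by (intro sum.neutral) auto
  have symXB: "\<And>a b. a < d \<Longrightarrow> b < d \<Longrightarrow> XB a b = XB b a" unfolding XB_def by (simp add: mult.commute)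
  have GB: "ip n (mv d Bf (\<psi>' i)) (mv d Bf (\<psi>' j)) = (if i = j then lam' j else 0)" if "i < d" "j < d" for i j
  proof -
    have "ip n (mv d Bf (\<psi>' i)) (mv d Bf (\<psi>' j)) = ip d (\<psi>' i) (mv d XB (\<psi>' j))" unfolding XB_def by (rule gram)
    also have "\<dots> = ip d (\<psi>' i) (\<lambda>a. lam' j * \<psi>' j a)" using evB that unfolding XB_def by (intro ip_cong) auto
    also have "\<dots> = lam' j * ip d (\<psi>' i) (\<psi>' j)" by (rule ip_scale_right)
    finally show ?thesis using orthB that unfolding orthon_def by simp
  qed
  have lam'0: "lam' j \<ge> 0" if "j < d" for j
  proof -
    have "0 \<le> ip n (mv d Bf (\<psi>' j)) (mv d Bf (\<psi>' j))" unfolding ip_def by (intro sum_nonneg) auto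
    then show ?thesis using GB[OF that that] by simp
  qed
  define Jp where "Jp = {j. j < d \<and> lam' j > 0}"
  have Jpfin: "finite Jp" unfolding Jp_def by simp
  have orthv: "ip d (\<psi>' j) vf = 0" if j: "j \<in> Jp" for j
  proof -
    have jd: "j < d" and lp: "lam' j > 0" using j unfolding Jp_def by auto
    have "lam' j * ip d (\<psi>' j) vf = ip d (\<lambda>a. lam' j * \<psi>' j a) vf" by (simp add: ip_scale_left)
    also have "\<dots> = ip d (mv d XB (\<psi>' j)) vf" using evB jd unfolding XB_def by (intro ip_cong) auto
    also have "\<dots> = ip d (\<psi>' j) (mv d XB vf)" using ip_mv_sym[of d XB] symXB by metis
    also have "\<dots> = 0" unfolding ip_def XBv by simp
    finally show ?thesis using lp by simp
  qed
  have ABeq: "mv d Af (\<psi>' j) t = mv d Bf (\<psi>' j) t" if j: "j \<in> Jp" and t: "t < n" for j t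
  proof -
    have "mv d Bf (\<psi>' j) t = (\<Sum>x<d. Af t x * \<psi>' j x - Av t * (vf x * \<psi>' j x))"
      unfolding mv_def using t unfolding Av_def by (intro sum.cong) (auto simp: Bf algebra_simps)
    also have "\<dots> = mv d Af (\<psi>' j) t - Av t * ip d vf (\<psi>' j)"
      unfolding ip_def mv_def by (simp add: sum_subtractf sum_distrib_left)
    finally show ?thesis using orthv[OF j] by (simp add: ip_comm)
  qed
  have wB0: "ip n wv (mv d Bf (\<psi>' j)) = 0" for j
  proof -
    have "ip n wv (mv d Bf (\<psi>' j)) = (\<Sum>t<n. \<Sum>x<d. \<psi>' j x * (Bf t x * wv t))"
      unfolding ip_def mv_def by (simp add: sum_distrib_left mult_ac)
    also have "\<dots> = (\<Sum>x<d. \<Sum>t<n. \<psi>' j x * (Bf t x * wv t))" by (rule sum.swap)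
    also have "\<dots> = (\<Sum>x<d. \<psi>' j x * (\<Sum>t<n. Bf t x * wv t))" by (simp add: sum_distrib_left)
    also have "\<dots> = 0" using BTw by (intro sum.neutral) auto
    finally show ?thesis .
  qed
  define \<sigma> where "\<sigma> j = sqrt (lam' j)" for j
  define e where "e i = (case i of None \<Rightarrow> vf | Some j \<Rightarrow> \<psi>' j)" for i
  define u where "u i = (case i of None \<Rightarrow> wv | Some j \<Rightarrow> (\<lambda>t. (1 / \<sigma> j) * mv d Bf (\<psi>' j) t))" for i
  define K where "K = insert None (Some ` Jp)"
  have Kfin: "finite K" unfolding K_def using Jpfin by simp
  have oe: "ip d (e i) (e j) = (if i = j then 1 else 0)" if "i \<in> K" "j \<in> K" for i j
  proof (cases i)
    case None
    show ?thesis
    proof (cases j)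
      case None then show ?thesis using \<open>i = None\<close> vv unfolding e_def by simp
    next
      case (Some k) then have "k \<in> Jp" using that unfolding K_def by auto
      then show ?thesis using Some \<open>i = None\<close> orthv unfolding e_def by (simp add: ip_comm)
    qed
  next
    case (Some l)
    then have l: "l \<in> Jp" using that unfolding K_def by auto
    show ?thesis
    proof (cases j)
      case None then show ?thesis using Some orthv[OF l] unfolding e_def by simp
    next
      case (Some k) then have "k \<in> Jp" using that unfolding K_def by auto
      then show ?thesis using Some \<open>i = Some l\<close> l orthB unfolding e_def orthon_def Jp_def by auto
    qed
  qed
  have ou: "ip n (u i) (u j) = (if i = j then 1 else 0)" if "i \<in> K" "j \<in> K" for i j
  proof (cases i)
    case None
    show ?thesis
    proof (cases j)
      case None then show ?thesis using \<open>i = None\<close> ww unfolding u_def by simp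
    next
      case (Some k)
      have "ip n (u i) (u j) = (1 / \<sigma> k) * ip n wv (mv d Bf (\<psi>' k))"
        unfolding u_def Some \<open>i = None\<close> option.case by (rule ip_scale_right)
      then show ?thesis using \<open>i = None\<close> Some wB0 by simp
    qed
  next
    case (Some l)
    then have l: "l \<in> Jp" using that unfolding K_def by auto
    show ?thesis
    proof (cases j)
      case None
      have "ip n (u i) (u j) = (1 / \<sigma> l) * ip n (mv d Bf (\<psi>' l)) wv"
        unfolding u_def None \<open>i = Some l\<close> option.case by (rule ip_scale_left)
      then show ?thesis using None Some wB0 by (simp add: ip_comm)
    next
      case (Some k) then have k: "k \<in> Jp" using that unfolding K_def by auto
      have "ip n (u i) (u j) = (1 / \<sigma> l) * (1 / \<sigma> k) * ip n (mv d Bf (\<psi>' l)) (mv d Bf (\<psi>' k))"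
        unfolding u_def Some \<open>i = Some l\<close> option.case ip_scale_left ip_scale_right by simp
      also have "\<dots> = (if i = j then 1 else 0)"
        using GB[of l k] l k Some \<open>i = Some l\<close> unfolding Jp_def \<sigma>_def by auto
      finally show ?thesis .
    qed
  qed
  have main: "(\<Sum>i\<in>K. \<bar>ip n (u i) (mv d Af (e i))\<bar> powr p) \<le> (\<Sum>j<d. sqrt (lam j) powr p)"
    by (rule main_ineq[OF orthA evA p Kfin ou oe])
  have val_some: "\<bar>ip n (u (Some j)) (mv d Af (e (Some j)))\<bar> = sqrt (lam' j)" if j: "j \<in> Jp" for j
  proof -
    have lp: "lam' j > 0" using j unfolding Jp_def by simp
    have "ip n (u (Some j)) (mv d Af (e (Some j))) = ip n (u (Some j)) (mv d Bf (\<psi>' j))"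
      unfolding e_def using ABeq[OF j] by (intro ip_cong) auto
    also have "\<dots> = (1 / \<sigma> j) * ip n (mv d Bf (\<psi>' j)) (mv d Bf (\<psi>' j))"
      unfolding u_def option.case ip_scale_left by simp
    also have "\<dots> = (1 / \<sigma> j) * lam' j" using GB j unfolding Jp_def by simp
    also have "\<dots> = sqrt (lam' j)" unfolding \<sigma>_def using lp
      by (metis less_eq_real_def real_div_sqrt mult.commute times_divide_eq_right mult_1)
    finally show ?thesis using lp by simp
  qed
  have "(\<Sum>i\<in>K. \<bar>ip n (u i) (mv d Af (e i))\<bar> powr p)
      = \<bar>ip n wv (mv d Af vf)\<bar> powr p + (\<Sum>j\<in>Jp. \<bar>ip n (u (Some j)) (mv d Af (e (Some j)))\<bar> powr p)"
    unfolding K_def using Jpfin by (simp add: sum.reindex u_def e_def)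
  also have "\<bar>ip n wv (mv d Af vf)\<bar> = \<alpha>" using wAv \<alpha> unfolding Av_def by simp
  also have "(\<Sum>j\<in>Jp. \<bar>ip n (u (Some j)) (mv d Af (e (Some j)))\<bar> powr p) = (\<Sum>j\<in>Jp. sqrt (lam' j) powr p)"
    using val_some by (intro sum.cong) auto
  also have "(\<Sum>j\<in>Jp. sqrt (lam' j) powr p) = (\<Sum>j<d. sqrt (lam' j) powr p)"
  proof -
    have "(\<Sum>j<d. sqrt (lam' j) powr p) = (\<Sum>j<d. if lam' j > 0 then sqrt (lam' j) powr p else 0)"
      using lam'0 by (intro sum.cong) (auto simp: less_eq_real_def)
    also have "\<dots> = (\<Sum>j\<in>Jp. sqrt (lam' j) powr p)"
      unfolding Jp_def by (simp add: sum.inter_filter[symmetric] lessThan_def)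
    finally show ?thesis by simp
  qed
  finally show ?thesis using main by simp
qed

lemma powr_inv_powr:
  fixes S p :: real
  assumes "S \<ge> 0" "p \<ge> 1"
  shows "(S powr (1 / p)) powr p = S"
proof (cases "S = 0")
  case True then show ?thesis by simp
next
  case False
  then have "S > 0" using assms by simp
  then show ?thesis using assms by (simp add: powr_powr)
qed

lemma schat:
  assumes "singular_values M = image_mset sqrt (mset (map lam [0..<d]))" "p \<ge> 1"
  shows "schatten_norm p M powr p = (\<Sum>j<d. sqrt (lam j) powr p)"
proof -
  have "schatten_norm p M powr p = ((\<Sum>j<d. sqrt (lam j) powr p) powr (1 / p)) powr p"
    unfolding schatten_norm_def sum_sv[OF assms(1)] ..
  also have "\<dots> = (\<Sum>j<d. sqrt (lam j) powr p)"
    by (rule powr_inv_powr[OF _ assms(2)]) (intro sum_nonneg, simp)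
  finally show ?thesis .
qed

theorem lemma7p5:
  fixes p :: real and n d :: nat and A :: "real mat" and w v :: "real vec"
  assumes "p \<ge> 1"
    and "A \<in> carrier_mat n d"
    and "w \<in> carrier_vec n"
    and "vnorm2 w = 1"
    and "transpose_mat A *\<^sub>v w \<noteq> 0\<^sub>v d"
    and "v = (1 / vnorm2 (transpose_mat A *\<^sub>v w)) \<cdot>\<^sub>v (transpose_mat A *\<^sub>v w)"
  shows "schatten_norm p A powr p \<ge>
           schatten_norm p (outer_prod w w * A) powr p
         + schatten_norm p (A * (1\<^sub>m d - outer_prod v v)) powr p"
proof -
  note p = assms(1) and A = assms(2) and w = assms(3)
  define a where "a = transpose_mat A *\<^sub>v w"
  have a: "a \<in> carrier_vec d" unfolding a_def using A by (intro carrier_vecI) simp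
  define \<alpha> where "\<alpha> = vnorm2 a"
  have v: "v = (1 / \<alpha>) \<cdot>\<^sub>v a" unfolding \<alpha>_def a_def using assms(6) by simp
  have vc: "v \<in> carrier_vec d" unfolding v using a by simp
  define Af where "Af t x = A $$ (t, x)" for t x
  define wv where "wv t = w $ t" for t
  define vf where "vf x = v $ x" for x
  define af where "af x = a $ x" for x
  have af: "af x = (\<Sum>t<n. Af t x * wv t)" if "x < d" for x
    unfolding af_def a_def Af_def wv_def using that A w by (simp add: scalar_prod_def atLeast0LessThan)
  have aa: "a \<bullet> a = ip d af af" unfolding ip_def af_def scalar_prod_def using a by (simp add: atLeast0LessThan)
  have \<alpha>eq: "\<alpha> = sqrt (ip d af af)" unfolding \<alpha>_def vnorm2_def aa ..
  have "ip d af af \<noteq> 0"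
  proof
    assume "ip d af af = 0"
    then have "\<forall>x\<in>{..<d}. af x * af x = 0" unfolding ip_def by (subst sum_nonneg_eq_0_iff[symmetric]) auto
    then have "a = 0\<^sub>v d" using a unfolding af_def by (intro eq_vecI) auto
    then show False using assms(5) unfolding a_def by simp
  qed
  moreover have "ip d af af \<ge> 0" unfolding ip_def by (intro sum_nonneg) auto
  ultimately have \<alpha>pos: "\<alpha> > 0" unfolding \<alpha>eq by simp
  have vfx: "vf x = af x / \<alpha>" if "x < d" for x unfolding vf_def af_def v using that a by simp
  have av: "\<alpha> * vf x = (\<Sum>t<n. Af t x * wv t)" if "x < d" for x using vfx[OF that] af[OF that] \<alpha>pos by simp
  have vv: "ip d vf vf = 1"
  proof -
    have "ip d vf vf = ip d (\<lambda>x. (1 / \<alpha>) * af x) (\<lambda>x. (1 / \<alpha>) * af x)"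
      using vfx by (intro ip_cong) auto
    also have "\<dots> = (1 / \<alpha>) * (1 / \<alpha>) * ip d af af" unfolding ip_scale_left ip_scale_right by simp
    also have "\<dots> = 1"
    proof -
      have e: "ip d af af = \<alpha> * \<alpha>" unfolding \<alpha>eq using \<open>0 \<le> ip d af af\<close> by simp
      show ?thesis unfolding e using \<alpha>pos by simp
    qed
    finally show ?thesis .
  qed
  have ww: "ip n wv wv = 1"
  proof -
    have "w \<bullet> w = ip n wv wv" unfolding ip_def wv_def scalar_prod_def using w by (simp add: atLeast0LessThan)
    moreover have "sqrt (w \<bullet> w) = 1" using assms(4) unfolding vnorm2_def .
    ultimately show ?thesis by simp
  qed
  define W where "W = outer_prod w w * A"
  have W: "W \<in> carrier_mat n d" unfolding W_def outer_prod_def using A w by auto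
  have Wf: "W $$ (t, x) = wv t * af x" if "t < n" "x < d" for t x
  proof -
    have "W $$ (t, x) = (\<Sum>s<n. w $ t * w $ s * A $$ (s, x))"
      unfolding W_def outer_prod_def using that A w by (simp add: scalar_prod_def atLeast0LessThan)
    also have "\<dots> = wv t * af x" unfolding af[OF that(2)] wv_def Af_def
      by (simp add: sum_distrib_left mult_ac)
    finally show ?thesis .
  qed
  define B where "B = A * (1\<^sub>m d - outer_prod v v)"
  have B: "B \<in> carrier_mat n d" unfolding B_def outer_prod_def using A vc by auto
  have Bf: "B $$ (t, x) = Af t x - mv d Af vf t * vf x" if t: "t < n" and x: "x < d" for t x
  proof -
    have "B $$ (t, x) = (\<Sum>y<d. A $$ (t, y) * ((if y = x then 1 else 0) - v $ y * v $ x))"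
      unfolding B_def outer_prod_def using t x A vc by (simp add: scalar_prod_def atLeast0LessThan)
    also have "\<dots> = (\<Sum>y<d. (if y = x then A $$ (t, y) else 0) - A $$ (t, y) * v $ y * v $ x)"
      by (intro sum.cong) (auto simp: algebra_simps)
    also have "\<dots> = (\<Sum>y<d. (if y = x then A $$ (t, y) else 0)) - (\<Sum>y<d. A $$ (t, y) * v $ y) * v $ x"
      by (simp only: sum_subtractf sum_distrib_right)
    also have "\<dots> = Af t x - mv d Af vf t * vf x" using x unfolding Af_def mv_def vf_def by simp
    finally show ?thesis .
  qed
  obtain \<psi> lam where orthA: "orthon d d \<psi>"
    and evA: "\<forall>j<d. \<forall>a<d. mv d (\<lambda>a b. \<Sum>t<n. A $$ (t,a) * A $$ (t,b)) (\<psi> j) a = lam j * \<psi> j a"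
    and svA: "singular_values A = image_mset sqrt (mset (map lam [0..<d]))"
    using sv_spectral[OF A] by blast
  obtain \<psi>W lamW where orthW: "orthon d d \<psi>W"
    and evW: "\<forall>j<d. \<forall>a<d. mv d (\<lambda>a b. \<Sum>t<n. W $$ (t,a) * W $$ (t,b)) (\<psi>W j) a = lamW j * \<psi>W j a"
    and svW: "singular_values W = image_mset sqrt (mset (map lamW [0..<d]))"
    using sv_spectral[OF W] by blast
  obtain \<psi>B lamB where orthB: "orthon d d \<psi>B"
    and evB: "\<forall>j<d. \<forall>a<d. mv d (\<lambda>a b. \<Sum>t<n. B $$ (t,a) * B $$ (t,b)) (\<psi>B j) a = lamB j * \<psi>B j a"
    and svB: "singular_values B = image_mset sqrt (mset (map lamB [0..<d]))"
    using sv_spectral[OF B] by blast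
  have SW: "(\<Sum>j<d. sqrt (lamW j) powr p) \<le> \<alpha> powr p"
    unfolding \<alpha>eq
    by (rule W_part[where Wf = "\<lambda>t x. W $$ (t, x)", OF orthW evW Wf ww p])
  have evA': "\<forall>j<d. \<forall>a<d. mv d (\<lambda>a b. \<Sum>t<n. Af t a * Af t b) (\<psi> j) a = lam j * \<psi> j a"
    using evA unfolding Af_def .
  have SB: "\<alpha> powr p + (\<Sum>j<d. sqrt (lamB j) powr p) \<le> (\<Sum>j<d. sqrt (lam j) powr p)"
    by (rule B_part[where Bf = "\<lambda>t x. B $$ (t, x)", OF orthA evA' orthB evB Bf ww vv av \<alpha>pos p])
  show ?thesis
    unfolding schat[OF svA p] W_def[symmetric] B_def[symmetric] schat[OF svW p] schat[OF svB p]
    using SW SB by linarith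
qed


end
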